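(* Every GSWNC ring $R$ is Dedekind-finite, i.e., whenever $a,b \in R$ satisfy $ab = 1$, then $ba = 1$.
   Context: All rings are associative with identity. An element $a$ of a ring is strongly weakly nil-clean if there exist an idempotent $e$ and a nilpotent $q$ with $eq = qe$ such that $a = q + e$ or $a = q - e$. A ring is GSWNC if every non-invertible element is strongly weakly nil-clean. *)

theory Defs
  imports Main
begin

definition idempotent :: "'a::ring_1 \<Rightarrow> bool" where
  "idempotent e \<longleftrightarrow> e * e = e"

definition nilpotent :: "'a::ring_1 \<Rightarrow> bool" where
  "nilpotent q \<longleftrightarrow> (\<exists>n::nat. q ^ n = 0)"

definition invertible :: "'a::ring_1 \<Rightarrow> bool" where
  "invertible a \<longleftrightarrow> (\<exists>b. a * b = 1 \<and> b * a = 1)"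

definition strongly_weakly_nil_clean :: "'a::ring_1 \<Rightarrow> bool" where
  "strongly_weakly_nil_clean a \<longleftrightarrow>
     (\<exists>e q. idempotent e \<and> nilpotent q \<and> e * q = q * e \<and> (a = q + e \<or> a = q - e))"

definition GSWNC :: "'a::ring_1 itself \<Rightarrow> bool" where
  "GSWNC (_ :: 'a itself) \<longleftrightarrow>
     (\<forall>a::'a. \<not> invertible a \<longrightarrow> strongly_weakly_nil_clean a)"

end

theory Submission
  imports Defs
begin

lemma comm_pow: fixes x y :: "'a::ring_1" assumes "x*y = y*x" shows "x^n * y = y * x^n"
proof (induction n)
  case (Suc n)
  have "x^Suc n * y = x * (x^n * y)" by (simp add: mult.assoc)
  also have "\<dots> = (x*y) * x^n" using Suc by (simp add: mult.assoc)
  also have "\<dots> = y * x^Suc n" using assms by (simp add: mult.assoc)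
  finally show ?case .
qed simp

lemma pow_mult_comm: fixes x y :: "'a::ring_1" assumes "x*y = y*x" shows "(x*y)^n = x^n * y^n"
proof (induction n)
  case (Suc n)
  have "(x*y)^Suc n = x*y*(x^n*y^n)" using Suc by simp
  also have "\<dots> = x*(y*x^n)*y^n" by (simp add: mult.assoc)
  also have "\<dots> = x*(x^n*y)*y^n" using comm_pow[OF assms] by simp
  also have "\<dots> = x^Suc n * y^Suc n" by (simp add: mult.assoc)
  finally show ?case .
qed simp

lemma geo: fixes y :: "'a::ring_1"
  shows "(1-y)*(\<Sum>i<n. y^i) = 1 - y^n \<and> (\<Sum>i<n. y^i)*(1-y) = 1 - y^n"
proof (induction n)
  case (Suc n)
  have "(1-y)*(\<Sum>i<Suc n. y^i) = (1-y)*(\<Sum>i<n. y^i) + (1-y)*y^n" by (simp add: distrib_left)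
  also have "\<dots> = 1 - y^Suc n" using Suc by (simp add: algebra_simps power_Suc2)
  finally have 1: "(1-y)*(\<Sum>i<Suc n. y^i) = 1 - y^Suc n" .
  have "(1-y)*(\<Sum>i<n. y^i) = (\<Sum>i<n. y^i)*(1-y)" using Suc by simp
  then have cm: "y*(\<Sum>i<n. y^i) = (\<Sum>i<n. y^i)*y" by (simp add: algebra_simps)
  have "(\<Sum>i<Suc n. y^i)*(1-y) = (\<Sum>i<n. y^i)*(1-y) + y^n*(1-y)" by (simp add: distrib_right)
  also have "\<dots> = 1 - y^Suc n" using Suc cm by (simp add: algebra_simps power_commutes)
  finally show ?case using 1 by simp
qed simp

lemma nil_inv: fixes y :: "'a::ring_1" assumes "y^n = 0" shows "invertible (1-y)"
  using geo[of y n] assms unfolding invertible_def by auto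

lemma powers_inv: fixes a b :: "'a::ring_1" assumes "a*b = 1" shows "a^n * b^n = 1"
proof (induction n)
  case (Suc n)
  have "a^Suc n * b^Suc n = a^n * (a*b) * b^n" 
    by (metis power_Suc2 power_Suc mult.assoc)
  then show ?case using Suc assms by simp
qed simp

theorem corollary2p36:
  assumes "GSWNC TYPE('a::ring_1)"
  shows "\<forall>a b :: 'a. a * b = 1 \<longrightarrow> b * a = 1"
proof (intro allI impI, rule ccontr)
  fix a b :: 'a
  assume ab: "a*b = 1" and ba: "b*a \<noteq> 1"
  have ninv: "\<not> invertible b"
  proof
    assume "invertible b"
    then obtain c where c: "b*c = 1" "c*b = 1" unfolding invertible_def by auto
    have "a = a*(b*c)" using c by simp
    also have "\<dots> = c" using ab by (simp flip: mult.assoc)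
    finally show False using ba c by simp
  qed
  then have "strongly_weakly_nil_clean b" using assms unfolding GSWNC_def by auto
  then obtain e q n where e: "e*e = e" and qn: "q^n = 0" and eq: "e*q = q*e"
    and bb: "b = q + e \<or> b = q - e"
    unfolding strongly_weakly_nil_clean_def idempotent_def nilpotent_def by auto
  show False using bb
  proof
    assume b: "b = q + e"
    define x where "x = 1 - q - (e+e)"
    have qx: "q*x = x*q" unfolding x_def using eq by (simp add: algebra_simps)
    have "b*(1-b) = q*x" unfolding b x_def using e eq by (simp add: algebra_simps)
    then have "(b*(1-b))^n = 0" using pow_mult_comm[OF qx, of n] qn by simp
    then have "b^n * (1-b)^n = 0" using pow_mult_comm[of b "1-b" n] by (simp add: algebra_simps)
    then have "a^n * b^n * (1-b)^n = 0" by (simp add: mult.assoc)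
    then have "(1-b)^n = 0" using powers_inv[OF ab, of n] by simp
    then have "invertible (1-(1-b))" by (rule nil_inv)
    then show False using ninv by simp
  next
    assume b: "b = q - e"
    define x where "x = 1 + q - (e+e)"
    have qx: "q*x = x*q" unfolding x_def using eq by (simp add: algebra_simps)
    have "b*(1+b) = q*x" unfolding b x_def using e eq by (simp add: algebra_simps)
    then have "(b*(1+b))^n = 0" using pow_mult_comm[OF qx, of n] qn by simp
    then have "b^n * (1+b)^n = 0" using pow_mult_comm[of b "1+b" n] by (simp add: algebra_simps)
    then have "a^n * b^n * (1+b)^n = 0" by (simp add: mult.assoc)
    then have "(1+b)^n = 0" using powers_inv[OF ab, of n] by simp
    then have "invertible (1-(1+b))" by (rule nil_inv)
    then obtain c where c: "(-b)*c = 1" "c*(-b) = 1" unfolding invertible_def by auto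
    then have "invertible b" unfolding invertible_def
      by (rule_tac x="-c" in exI) simp
    then show False using ninv by simp
  qed
qed

end
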